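(* Let $\Omega\subset\mathbb R^n$ be a bounded domain, $\alpha<0$, and $\varphi:\partial\Omega\to\mathbb R$ positive. Then there is at most one positive solution $u\in C^2(\Omega)\cap C^0(\overline\Omega)$ of $$\mathrm{div}\left(\frac{Du}{\sqrt{1-|Du|^2}}\right)=\frac{\alpha}{u\sqrt{1-|Du|^2}}\ \text{ in }\Omega,\qquad u=\varphi\ \text{ on }\partial\Omega,\qquad |Du|<1\ \text{ in }\overline\Omega.$$ *)

theory Defs
  imports "HOL-Analysis.Analysis"
begin

definition grad :: "('a::euclidean_space \<Rightarrow> real) \<Rightarrow> 'a \<Rightarrow> 'a" where
  "grad u x = (\<Sum>i\<in>Basis. frechet_derivative u (at x) i *\<^sub>R i)"

definition divergence :: "('a::euclidean_space \<Rightarrow> 'a) \<Rightarrow> 'a \<Rightarrow> real" where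
  "divergence F x = (\<Sum>i\<in>Basis. frechet_derivative F (at x) i \<bullet> i)"

definition C2_on :: "'a::euclidean_space set \<Rightarrow> ('a \<Rightarrow> real) \<Rightarrow> bool" where
  "C2_on \<Omega> u \<longleftrightarrow>
     (\<forall>x\<in>\<Omega>. u differentiable (at x) \<and> grad u differentiable (at x)) \<and>
     (\<forall>i\<in>Basis. \<forall>j\<in>Basis.
        continuous_on \<Omega> (\<lambda>x. frechet_derivative (grad u) (at x) i \<bullet> j))"

definition is_pos_solution ::
  "'a::euclidean_space set \<Rightarrow> real \<Rightarrow> ('a \<Rightarrow> real) \<Rightarrow> ('a \<Rightarrow> real) \<Rightarrow> bool" where
  "is_pos_solution \<Omega> \<alpha> \<phi> u \<longleftrightarrow>
     C2_on \<Omega> u \<and> continuous_on (closure \<Omega>) u \<and>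
     (\<forall>x\<in>\<Omega>. u x > 0) \<and>
     (\<forall>x\<in>\<Omega>. norm (grad u x) < 1) \<and>
     (\<forall>x\<in>\<Omega>. divergence (\<lambda>y. grad u y /\<^sub>R sqrt (1 - (norm (grad u y))\<^sup>2)) x
               = \<alpha> / (u x * sqrt (1 - (norm (grad u x))\<^sup>2))) \<and>
     (\<forall>x\<in>frontier \<Omega>. u x = \<phi> x)"

end

theory Submission
  imports Defs
begin
lemma Fderiv:
  fixes G :: "'a::euclidean_space \<Rightarrow> 'a"
  assumes d: "(G has_derivative G') (at x)" and n: "norm (G x) < 1"
  shows "((\<lambda>y. G y /\<^sub>R sqrt (1 - (norm (G y))\<^sup>2)) has_derivative
     (\<lambda>h. G' h /\<^sub>R sqrt (1 - (norm (G x))\<^sup>2) + ((G x \<bullet> G' h) / (sqrt (1 - (norm (G x))\<^sup>2))^3) *\<^sub>R G x)) (at x)"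
proof -
  define S where "S = 1 - (norm (G x))\<^sup>2"
  have S0: "S > 0" using n unfolding S_def by (simp add: abs_square_less_1)
  have ds: "((\<lambda>y. 1 - (norm (G y))\<^sup>2) has_derivative (\<lambda>h. - (2 * (G x \<bullet> G' h)))) (at x)"
    unfolding power2_norm_eq_inner
    by (rule derivative_eq_intros refl d | simp add: inner_commute)+
  have dsq: "((\<lambda>y. sqrt (1 - (norm (G y))\<^sup>2)) has_derivative (\<lambda>h. - (G x \<bullet> G' h) / sqrt S)) (at x)"
  proof -
    have "(sqrt has_real_derivative inverse (sqrt S) / 2) (at (1 - (norm (G x))\<^sup>2))"
      using DERIV_real_sqrt[OF S0] unfolding S_def .
    from DERIV_compose_FDERIV[OF this ds] show ?thesis by (simp add: field_simps)
  qed
  have sq0: "sqrt S \<noteq> 0" using S0 by simp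
  have dinv: "((\<lambda>y. inverse (sqrt (1 - (norm (G y))\<^sup>2))) has_derivative
     (\<lambda>h. - (inverse (sqrt S) * (- (G x \<bullet> G' h) / sqrt S) * inverse (sqrt S)))) (at x)"
    using Deriv.has_derivative_inverse[OF _ dsq] sq0 unfolding S_def by simp
  have "((\<lambda>y. inverse (sqrt (1 - (norm (G y))\<^sup>2)) *\<^sub>R G y) has_derivative
     (\<lambda>h. inverse (sqrt (1 - (norm (G x))\<^sup>2)) *\<^sub>R G' h + (- (inverse (sqrt S) * (- (G x \<bullet> G' h) / sqrt S) * inverse (sqrt S))) *\<^sub>R G x)) (at x)"
    by (rule has_derivative_scaleR[OF dinv d])
  moreover have "(\<lambda>h. inverse (sqrt (1 - (norm (G x))\<^sup>2)) *\<^sub>R G' h + (- (inverse (sqrt S) * (- (G x \<bullet> G' h) / sqrt S) * inverse (sqrt S))) *\<^sub>R G x)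
     = (\<lambda>h. G' h /\<^sub>R sqrt (1 - (norm (G x))\<^sup>2) + ((G x \<bullet> G' h) / (sqrt (1 - (norm (G x))\<^sup>2))^3) *\<^sub>R G x)"
    unfolding S_def[symmetric] using sq0 by (auto simp: field_simps power3_eq_cube)
  ultimately show ?thesis by simp
qed

lemma one_dim_max:
  fixes g g' :: "real \<Rightarrow> real"
  assumes "\<delta> > 0" and dg: "\<And>t. t \<in> {0..\<delta>} \<Longrightarrow> (g has_real_derivative g' t) (at t)"
    and g0: "g' 0 = 0" and dg': "(g' has_real_derivative c) (at 0)"
    and mx: "\<And>t. t \<in> {0..\<delta>} \<Longrightarrow> g t \<le> g 0"
  shows "c \<le> 0"
proof (rule ccontr)
  assume "\<not> c \<le> 0"
  then have "c > 0" by simp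
  from DERIV_pos_inc_right[OF dg' this] obtain d where d: "d > 0" "\<And>h. h > 0 \<Longrightarrow> h < d \<Longrightarrow> g' 0 < g' (0 + h)"
    by blast
  define t where "t = min d \<delta> / 2"
  have t: "0 < t" "t < d" "t \<le> \<delta>" using d assms(1) by (auto simp: t_def)
  have "\<exists>z. 0 < z \<and> z < t \<and> g t - g 0 = (t - 0) * g' z"
    by (rule MVT2) (use t dg in auto)
  then obtain z where z: "0 < z" "z < t" "g t - g 0 = t * g' z" by auto
  have "g' z > 0" using d(2)[of z] z t g0 by simp
  then have "t * g' z > 0" using z t by (simp add: mult_pos_pos)
  then have "g t > g 0" using z(3) by linarith
  with mx[of t] t show False by simp
qed

lemma lin_grad:
  fixes L :: "'a::euclidean_space \<Rightarrow> real"
  assumes "linear L"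
  shows "(\<Sum>i\<in>Basis. L i *\<^sub>R i) \<bullet> h = L h"
proof -
  have "(\<Sum>i\<in>Basis. L i *\<^sub>R i) \<bullet> h = (\<Sum>i\<in>Basis. (h \<bullet> i) * L i)"
    by (simp add: inner_sum_right inner_commute mult.commute)
  also have "\<dots> = L (\<Sum>i\<in>Basis. (h \<bullet> i) *\<^sub>R i)"
    using assms by (simp add: linear_sum linear_scale)
  also have "\<dots> = L h" by (simp add: euclidean_representation)
  finally show ?thesis .
qed

lemma grad_apply:
  assumes "u differentiable (at x)"
  shows "frechet_derivative u (at x) h = grad u x \<bullet> h"
proof -
  have "linear (frechet_derivative u (at x))"
    using assms frechet_derivative_works has_derivative_linear by blast
  then show ?thesis unfolding grad_def by (simp add: lin_grad)
qed

lemma div_formula: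
  fixes u :: "'a::euclidean_space \<Rightarrow> real"
  assumes d: "grad u differentiable (at x)" and n: "norm (grad u x) < 1"
  shows "divergence (\<lambda>y. grad u y /\<^sub>R sqrt (1 - (norm (grad u y))\<^sup>2)) x
    = ((\<Sum>i\<in>Basis. frechet_derivative (grad u) (at x) i \<bullet> i)
       + (grad u x \<bullet> frechet_derivative (grad u) (at x) (grad u x)) / (1 - (norm (grad u x))\<^sup>2))
      / sqrt (1 - (norm (grad u x))\<^sup>2)"
proof -
  define G' where "G' = frechet_derivative (grad u) (at x)"
  define p where "p = grad u x"
  define S where "S = 1 - (norm p)\<^sup>2"
  have S0: "S > 0" using n unfolding S_def p_def by (simp add: abs_square_less_1)
  have hd: "(grad u has_derivative G') (at x)" using d frechet_derivative_works G'_def by blast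
  have lin: "linear G'" using hd has_derivative_linear by blast
  have fd: "frechet_derivative (\<lambda>y. grad u y /\<^sub>R sqrt (1 - (norm (grad u y))\<^sup>2)) (at x)
     = (\<lambda>h. G' h /\<^sub>R sqrt S + ((p \<bullet> G' h) / (sqrt S)^3) *\<^sub>R p)"
    using frechet_derivative_at[OF Fderiv[OF hd n]] unfolding S_def p_def by simp
  have key: "(\<Sum>i\<in>Basis. (p \<bullet> G' i) * (p \<bullet> i)) = p \<bullet> G' p"
  proof -
    have "G' p = G' (\<Sum>i\<in>Basis. (p \<bullet> i) *\<^sub>R i)" by (simp add: euclidean_representation)
    also have "\<dots> = (\<Sum>i\<in>Basis. (p \<bullet> i) *\<^sub>R G' i)" using lin by (simp add: linear_sum linear_scale)
    finally show ?thesis by (simp add: inner_sum_right mult.commute)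
  qed
  have "divergence (\<lambda>y. grad u y /\<^sub>R sqrt (1 - (norm (grad u y))\<^sup>2)) x
     = (\<Sum>i\<in>Basis. (G' i \<bullet> i) / sqrt S + (p \<bullet> G' i) * (p \<bullet> i) / (sqrt S)^3)"
    unfolding divergence_def fd by (simp add: inner_add_left divide_inverse mult_ac)
  also have "\<dots> = (\<Sum>i\<in>Basis. G' i \<bullet> i) / sqrt S + (p \<bullet> G' p) / (sqrt S)^3"
    by (simp add: sum.distrib sum_divide_distrib[symmetric] key)
  also have "\<dots> = ((\<Sum>i\<in>Basis. G' i \<bullet> i) + (p \<bullet> G' p) / S) / sqrt S"
    using S0 by (simp add: field_simps power3_eq_cube)
  finally show ?thesis unfolding G'_def p_def S_def .
qed


lemma hess:
  fixes u v :: "'a::euclidean_space \<Rightarrow> real"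
  assumes "open \<Omega>" "x0 \<in> \<Omega>"
    and du: "\<And>y. y \<in> \<Omega> \<Longrightarrow> u differentiable (at y)"
    and dv: "\<And>y. y \<in> \<Omega> \<Longrightarrow> v differentiable (at y)"
    and gu: "grad u differentiable (at x0)" and gv: "grad v differentiable (at x0)"
    and mx: "\<And>y. y \<in> \<Omega> \<Longrightarrow> u y - v y \<le> u x0 - v x0"
  shows "frechet_derivative (grad u) (at x0) h \<bullet> h \<le> frechet_derivative (grad v) (at x0) h \<bullet> h"
proof -
  obtain r where r: "r > 0" "ball x0 r \<subseteq> \<Omega>" using assms(1,2) open_contains_ball by blast
  define \<delta> where "\<delta> = r / (2 * (norm h + 1))"
  have \<delta>0: "\<delta> > 0" using r unfolding \<delta>_def by (intro divide_pos_pos) (auto simp: add_nonneg_pos)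
  have inb: "x0 + t *\<^sub>R h \<in> \<Omega>" if "t \<in> {0..\<delta>}" for t
  proof -
    have "\<delta> * norm h < r"
    proof -
      have "\<delta> * norm h = r * (norm h / (2 * (norm h + 1)))" by (simp add: \<delta>_def)
      also have "\<dots> < r * 1"
      proof -
        have pos: "2 * (norm h + 1) > 0" by (simp add: add_nonneg_pos)
        have "norm h / (2 * (norm h + 1)) < 1" unfolding pos_divide_less_eq[OF pos] by (smt (verit) norm_ge_zero)
        then show ?thesis using r by (intro mult_strict_left_mono) auto
      qed
      finally show ?thesis by simp
    qed
    moreover have "norm (t *\<^sub>R h) \<le> \<delta> * norm h" using that by (auto intro: mult_right_mono)
    ultimately have "x0 + t *\<^sub>R h \<in> ball x0 r" by (simp add: dist_norm)
    then show ?thesis using r by blast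
  qed
  define g where "g t = u (x0 + t *\<^sub>R h) - v (x0 + t *\<^sub>R h)" for t
  define g' where "g' t = (grad u (x0 + t *\<^sub>R h) - grad v (x0 + t *\<^sub>R h)) \<bullet> h" for t
  have dline: "((\<lambda>t::real. x0 + t *\<^sub>R h) has_derivative (\<lambda>s. s *\<^sub>R h)) (at t)" for t
    by (rule derivative_eq_intros refl | simp)+
  have dg: "(g has_real_derivative g' t) (at t)" if "t \<in> {0..\<delta>}" for t
  proof -
    let ?y = "x0 + t *\<^sub>R h"
    have y: "?y \<in> \<Omega>" using inb that by blast
    have hu: "(u has_derivative frechet_derivative u (at ?y)) (at ?y)" using du[OF y] frechet_derivative_works by blast
    have hv: "(v has_derivative frechet_derivative v (at ?y)) (at ?y)" using dv[OF y] frechet_derivative_works by blast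
    have lu: "linear (frechet_derivative u (at ?y))" using hu has_derivative_linear by blast
    have lv: "linear (frechet_derivative v (at ?y))" using hv has_derivative_linear by blast
    have "(g has_derivative (\<lambda>s. frechet_derivative u (at ?y) (s *\<^sub>R h) - frechet_derivative v (at ?y) (s *\<^sub>R h))) (at t)"
      unfolding g_def
      by (intro has_derivative_diff has_derivative_compose[OF dline hu] has_derivative_compose[OF dline hv])
    moreover have "(\<lambda>s. frechet_derivative u (at ?y) (s *\<^sub>R h) - frechet_derivative v (at ?y) (s *\<^sub>R h)) = (*) (g' t)"
      using lu lv by (auto simp: linear_scale grad_apply[OF du[OF y]] grad_apply[OF dv[OF y]] g'_def inner_diff_left algebra_simps)
    ultimately show ?thesis by (simp add: has_field_derivative_def)
  qed
  have g'0: "g' 0 = 0"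
  proof -
    have hu: "(u has_derivative frechet_derivative u (at x0)) (at x0)" using du[OF assms(2)] frechet_derivative_works by blast
    have hv: "(v has_derivative frechet_derivative v (at x0)) (at x0)" using dv[OF assms(2)] frechet_derivative_works by blast
    have "(\<lambda>h. frechet_derivative u (at x0) h - frechet_derivative v (at x0) h) = (\<lambda>h. 0)"
      by (rule differential_zero_maxmin[OF assms(2,1) has_derivative_diff[OF hu hv]]) (use mx in auto)
    then have "frechet_derivative u (at x0) h - frechet_derivative v (at x0) h = 0" by metis
    then show ?thesis unfolding g'_def
      by (simp add: grad_apply[OF du[OF assms(2)]] grad_apply[OF dv[OF assms(2)]] inner_diff_left)
  qed
  have dg': "(g' has_real_derivative (frechet_derivative (grad u) (at x0) h - frechet_derivative (grad v) (at x0) h) \<bullet> h) (at 0)"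
  proof -
    have hu: "(grad u has_derivative frechet_derivative (grad u) (at x0)) (at (x0 + 0 *\<^sub>R h))" using gu[unfolded frechet_derivative_works] by simp
    have hv: "(grad v has_derivative frechet_derivative (grad v) (at x0)) (at (x0 + 0 *\<^sub>R h))" using gv[unfolded frechet_derivative_works] by simp
    have lu: "linear (frechet_derivative (grad u) (at x0))" using hu has_derivative_linear by blast
    have lv: "linear (frechet_derivative (grad v) (at x0))" using hv has_derivative_linear by blast
    have "(g' has_derivative (\<lambda>s. (frechet_derivative (grad u) (at x0) (s *\<^sub>R h) - frechet_derivative (grad v) (at x0) (s *\<^sub>R h)) \<bullet> h)) (at 0)"
      unfolding g'_def
      by (intro has_derivative_inner_left has_derivative_diff has_derivative_compose[OF dline hu] has_derivative_compose[OF dline hv])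
    moreover have "(\<lambda>s. (frechet_derivative (grad u) (at x0) (s *\<^sub>R h) - frechet_derivative (grad v) (at x0) (s *\<^sub>R h)) \<bullet> h)
       = (*) ((frechet_derivative (grad u) (at x0) h - frechet_derivative (grad v) (at x0) h) \<bullet> h)"
      using lu lv by (auto simp: linear_scale inner_diff_left algebra_simps)
    ultimately show ?thesis by (simp add: has_field_derivative_def)
  qed
  have "(frechet_derivative (grad u) (at x0) h - frechet_derivative (grad v) (at x0) h) \<bullet> h \<le> 0"
    by (rule one_dim_max[OF \<delta>0 dg g'0 dg']) (use inb mx in \<open>auto simp: g_def\<close>)
  then show ?thesis by (simp add: inner_diff_left)
qed


lemma comparison:
  fixes \<Omega> :: "'a::euclidean_space set"
  assumes op: "open \<Omega>" and ne: "\<Omega> \<noteq> {}" and bd: "bounded \<Omega>" and al: "\<alpha> < 0"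
    and su: "is_pos_solution \<Omega> \<alpha> \<phi> u" and sv: "is_pos_solution \<Omega> \<alpha> \<phi> v"
  shows "\<forall>x\<in>closure \<Omega>. u x \<le> v x"
proof -
  have cpt: "compact (closure \<Omega>)" using bd compact_closure by blast
  have cw: "continuous_on (closure \<Omega>) (\<lambda>x. u x - v x)"
    using su sv unfolding is_pos_solution_def by (intro continuous_on_diff) auto
  obtain x0 where x0: "x0 \<in> closure \<Omega>" "\<And>y. y \<in> closure \<Omega> \<Longrightarrow> u y - v y \<le> u x0 - v x0"
    using continuous_attains_sup[OF cpt _ cw] ne by auto
  show ?thesis
  proof (cases "u x0 - v x0 \<le> 0")
    case True
    then show ?thesis using x0 by force
  next
    case False
    have x0O: "x0 \<in> \<Omega>"
    proof (rule ccontr)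
      assume "x0 \<notin> \<Omega>"
      then have "x0 \<in> frontier \<Omega>" using x0(1) op by (simp add: frontier_def interior_open)
      then have "u x0 = v x0" using su sv unfolding is_pos_solution_def by auto
      with False show False by simp
    qed
    have du: "\<And>y. y \<in> \<Omega> \<Longrightarrow> u differentiable (at y)" and gu: "grad u differentiable (at x0)"
      using su x0O unfolding is_pos_solution_def C2_on_def by auto
    have dv: "\<And>y. y \<in> \<Omega> \<Longrightarrow> v differentiable (at y)" and gv: "grad v differentiable (at x0)"
      using sv x0O unfolding is_pos_solution_def C2_on_def by auto
    have mx: "\<And>y. y \<in> \<Omega> \<Longrightarrow> u y - v y \<le> u x0 - v x0" using x0(2) closure_subset by blast
    have Q: "\<And>h. frechet_derivative (grad u) (at x0) h \<bullet> h \<le> frechet_derivative (grad v) (at x0) h \<bullet> h"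
      by (rule hess[OF op x0O du dv gu gv mx])
    have peq: "grad u x0 = grad v x0"
    proof -
      have hu: "(u has_derivative frechet_derivative u (at x0)) (at x0)" using du[OF x0O] frechet_derivative_works by blast
      have hv: "(v has_derivative frechet_derivative v (at x0)) (at x0)" using dv[OF x0O] frechet_derivative_works by blast
      have "(\<lambda>h. frechet_derivative u (at x0) h - frechet_derivative v (at x0) h) = (\<lambda>h. 0)"
        by (rule differential_zero_maxmin[OF x0O op has_derivative_diff[OF hu hv]]) (use mx in auto)
      then have "\<And>h. frechet_derivative u (at x0) h = frechet_derivative v (at x0) h" by (metis eq_iff_diff_eq_0)
      then show ?thesis unfolding grad_def by simp
    qed
    define p where "p = grad u x0"
    define S where "S = 1 - (norm p)\<^sup>2"
    have nu: "norm (grad u x0) < 1" and nv: "norm (grad v x0) < 1"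
      using su sv x0O unfolding is_pos_solution_def by auto
    have S0: "S > 0" using nu unfolding S_def p_def by (simp add: abs_square_less_1)
    have u0: "u x0 > 0" and v0: "v x0 > 0" using su sv x0O unfolding is_pos_solution_def by auto
    define Au where "Au = (\<Sum>i\<in>Basis. frechet_derivative (grad u) (at x0) i \<bullet> i) + (p \<bullet> frechet_derivative (grad u) (at x0) p) / S"
    define Av where "Av = (\<Sum>i\<in>Basis. frechet_derivative (grad v) (at x0) i \<bullet> i) + (p \<bullet> frechet_derivative (grad v) (at x0) p) / S"
    have eu: "Au / sqrt S = \<alpha> / (u x0 * sqrt S)"
      using su x0O div_formula[OF gu nu] unfolding is_pos_solution_def Au_def S_def p_def by auto
    have ev: "Av / sqrt S = \<alpha> / (v x0 * sqrt S)"
      using sv x0O div_formula[OF gv nv] unfolding is_pos_solution_def Av_def S_def p_def peq by auto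
    have sq: "sqrt S > 0" using S0 by simp
    have Au: "Au = \<alpha> / u x0" using eu sq u0 by (simp add: field_simps)
    have Av: "Av = \<alpha> / v x0" using ev sq v0 by (simp add: field_simps)
    have "Au \<le> Av"
      unfolding Au_def Av_def
      by (intro add_mono sum_mono divide_right_mono) (use Q S0 in \<open>auto simp: inner_commute\<close>)
    then have le: "\<alpha> / u x0 \<le> \<alpha> / v x0" using Au Av by simp
    have "\<alpha> / u x0 - \<alpha> / v x0 = \<alpha> * (v x0 - u x0) / (u x0 * v x0)"
      using u0 v0 by (simp add: field_simps)
    moreover have "\<alpha> * (v x0 - u x0) > 0" using al False by (intro mult_neg_neg) auto
    ultimately have "\<alpha> / u x0 - \<alpha> / v x0 > 0" using u0 v0 by simp
    with le show ?thesis by simp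
  qed
qed

theorem proposition4p4:
  fixes \<Omega> :: "'a::euclidean_space set"
    and \<alpha> :: real and \<phi> u v :: "'a \<Rightarrow> real"
  assumes "open \<Omega>" and "connected \<Omega>" and "\<Omega> \<noteq> {}" and "bounded \<Omega>"
    and "\<alpha> < 0"
    and "\<forall>x\<in>frontier \<Omega>. \<phi> x > 0"
    and "is_pos_solution \<Omega> \<alpha> \<phi> u"
    and "is_pos_solution \<Omega> \<alpha> \<phi> v"
  shows "\<forall>x\<in>closure \<Omega>. u x = v x"
  using comparison[OF assms(1,3,4,5,7,8)] comparison[OF assms(1,3,4,5,8,7)] by force

end
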